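(* Let $\mathcal G$ be a constructor GRS over a finite signature $\mathcal F$ and let $G\in\mathcal{TG}_{\mathrm{nrm}}(\mathcal F)$. (1) If $(H,l,r)\in\mathcal G$ and $\varphi:H{\restriction}l\to G$ is a homomorphism, then every path in $G$ from $\rho_G$ to $\varphi(l)$ is a safe path. (2) If moreover $\mathcal G$ is precedence terminating with argument separation and $G\to_{\mathcal G}H'$, then $H'\in\mathcal{TG}_{\mathrm{nrm}}(\mathcal F)$.
   Context: Term graphs. $\mathcal F=\mathcal C\cup\mathcal D$ is a finite signature (constructors and defined symbols, disjoint) with arity function $\mathrm{ar}$. A labeled graph consists of a finite acyclic directed graph $(V_G,E_G)$, a partial labeling $\mathrm{lab}_G:V_G\to\mathcal F$ and a successor function $\mathrm{att}_G:V_G\to V_G^*$ such that $\mathrm{att}_G(v)$ has length $\mathrm{ar}(\mathrm{lab}_G(v))$ if $v$ is labeled and is empty otherwise, and the set of entries of $\mathrm{att}_G(v)$ equals $\{u:(v,u)\in E_G\}$; the $j$-th entry is the $j$-th successor of $v$. Unlabeled nodes act as variables. A term graph additionally has a root $\rho_G$ from which every node is reachable; $\mathcal{TG}(\mathcal F)$ is the set of term graphs over $\mathcal F$ and $\mathcal{TG}(\mathcal C)$ those whose labeled nodes all carry constructors. $G{\restriction}v$ is the sub-term graph of nodes reachable from $v$, rooted at $v$; $H\subseteq G$ means $H=G{\restriction}v$ for some $v$. $G$ is closed if every node is labeled; basic if $\mathrm{lab}_G(\rho_G)\in\mathcal D$ and $G{\restriction}v\in\mathcal{TG}(\mathcal C)$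 for every successor $v$ of $\rho_G$. A path $\langle v_1,m_1,\dots,m_{k-1},v_k\rangle$ is a sequence of nodes where $v_{j+1}$ is the $m_j$-th successor of $v_j$. Argument separation. The argument positions of each $f\in\mathcal F$ are split into normal and safe ones, written $f(x_1,\dots,x_k;x_{k+1},\dots,x_{k+l})$; constructors have only safe positions; nodes with the same label have the same separation. For a labeled node $v$, $\mathrm{nrm}(v)$ (resp. $\mathrm{safe}(v)$) is the set of successors at normal (resp. safe) positions. $H\sqsubset_{\mathrm{nrm}}G$ means $H\subseteq G{\restriction}v$ for some $v\in\mathrm{nrm}(\rho_G)$. Rewriting. A homomorphism $\varphi$ from labeled graph $G$ to $H$ is a map $V_G\to V_H$ with $\mathrm{lab}_H(\varphi(v))=\mathrm{lab}_G(v)$ and $\mathrm{att}_H(\varphi(v))=\varphi(v_1),\dots,\varphi(v_k)$ whenever $v$ is labeled with $\mathrm{att}_G(v)=v_1,\dots,v_k$ (nothing is required at unlabeled nodes); it preserves the normal/safe split. A graph rewrite rule $(K,l,r)$ is a labeled graph $K$ with distinct nodes $l,r$ such that every unlabeled node of $K{\restriction}r$ lies in $K{\restriction}l$; it is a constructor rule if $K{\restriction}l$ is basic. A GRS is a (possibly infinite) set of rules; a constructor GRS consists of constructor rules. A redex in $G$ is a pair of a rule $(K,l,r)$ and a homomorphism $\varphi:K{\restriction}l\to G$; the rewrite step $G\to_{\mathcal G}H$ is the standard build/redirection/garbage-collection step: the labeled part of $K{\restriction}r$ not already in $K{\restriction}l$ is copied into $G$ (unlabeled nodes being mapped via $\varphi$),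 all edges into $\varphi(l)$ (and the root, if it is $\varphi(l)$) are redirected to the image of $r$, and nodes unreachable from the root are removed. Thus $H$ arises from $G$ by replacing $G{\restriction}\varphi(l)$ with an instance of $K{\restriction}r$. Precedence termination with argument separation. A precedence $\sqsubset$ is a well-founded strict partial order on $\mathcal F$ in which all constructors are minimal. For term graphs $H,G$ (sub-term graphs of a common graph), $H\sqsubset_{\mathrm{pt}}G$ holds if $\mathrm{lab}_H(v)\sqsubset\mathrm{lab}_G(\rho_G)$ for every labeled node $v$ of $H$ and additionally either (1) $H=G{\restriction}u$ or $H\sqsubset_{\mathrm{pt}}G{\restriction}u$ for some successor $u$ of $\rho_G$; or (2) $\rho_H$ is labeled, $H{\restriction}v\sqsubset_{\mathrm{nrm}}G$ for each $v\in\mathrm{nrm}(\rho_H)$, and $H{\restriction}v\sqsubset_{\mathrm{pt}}G$ for each $v\in\mathrm{safe}(\rho_H)$. A GRS $\mathcal G$ is precedence terminating with argument separation if for some argument separation and some precedence, $K{\restriction}r\sqsubset_{\mathrm{pt}}K{\restriction}l$ for every rule $(K,l,r)\in\mathcal G$. Safe paths and $\mathcal{TG}_{\mathrm{nrm}}$. A path $\langle v_1,m_1,\dots,v_k\rangle$ is safe if $v_{j+1}\in\mathrm{safe}(v_j)$ for all $j<k$ (the trivial path $\langle v\rangle$ is safe). $\mathcal{TG}_{\mathrm{nrm}}(\mathcal F)\subseteq\mathcal{TG}(\mathcal F)$ is defined inductively: $G\in\mathcal{TG}_{\mathrm{nrm}}(\mathcal F)$ if $G\in\mathcal{TG}(\mathcal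 C)$, or if $G{\restriction}v\in\mathcal{TG}(\mathcal C)$ for every $v\in\mathrm{nrm}(\rho_G)$ and $G{\restriction}v\in\mathcal{TG}_{\mathrm{nrm}}(\mathcal F)$ for every $v\in\mathrm{safe}(\rho_G)$. *)

theory Defs
  imports Main
begin

text \<open>A labeled graph: node set, partial labeling (None = unlabeled node, i.e. a variable),
  and successor lists.
  Successor positions are 0-based list indices.\<close>

record ('f,'v) lgraph =
  nodes :: "'v set"
  lab :: "'v \<Rightarrow> 'f option"
  att :: "'v \<Rightarrow> 'v list"

record ('f,'v) tgraph = "('f,'v) lgraph" + root :: 'v

definition edge_rel :: "('f,'v,'x) lgraph_scheme \<Rightarrow> ('v \<times> 'v) set" where
  "edge_rel G = {(v,u). v \<in> nodes G \<and> u \<in> set (att G v)}"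

definition reach :: "('f,'v,'x) lgraph_scheme \<Rightarrow> 'v \<Rightarrow> 'v set" where
  "reach G v = {u. (v,u) \<in> (edge_rel G)\<^sup>*}"

definition wf_lgraph :: "'f set \<Rightarrow> ('f \<Rightarrow> nat) \<Rightarrow> ('f,'v,'x) lgraph_scheme \<Rightarrow> bool" where
  "wf_lgraph F ar G \<longleftrightarrow> finite (nodes G) \<and>
     (\<forall>v\<in>nodes G. set (att G v) \<subseteq> nodes G \<and>
        (case lab G v of Some f \<Rightarrow> f \<in> F \<and> length (att G v) = ar f
                       | None \<Rightarrow> att G v = [])) \<and>
     acyclic (edge_rel G)"

definition is_tg :: "'f set \<Rightarrow> ('f \<Rightarrow> nat) \<Rightarrow> ('f,'v) tgraph \<Rightarrow> bool" where
  "is_tg F ar G \<longleftrightarrow> wf_lgraph F ar G \<and> root G \<in> nodes G \<and> nodes G \<subseteq> reach G (root G)"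

definition sub :: "('f,'v,'x) lgraph_scheme \<Rightarrow> 'v \<Rightarrow> ('f,'v) tgraph" where
  "sub G v = \<lparr> nodes = reach G v,
              lab = (\<lambda>x. if x \<in> reach G v then lab G x else None),
              att = (\<lambda>x. if x \<in> reach G v then att G x else []),
              root = v \<rparr>"

definition tgC :: "'f set \<Rightarrow> ('f,'v,'x) lgraph_scheme \<Rightarrow> 'v \<Rightarrow> bool" where
  "tgC C G v \<longleftrightarrow> (\<forall>u\<in>reach G v. \<forall>f. lab G u = Some f \<longrightarrow> f \<in> C)"

text \<open>na f is the number of normal argument positions of f: positions 0..na f - 1 are
  normal, positions na f .. ar f - 1 are safe.\<close>
definition arg_sep :: "'f set \<Rightarrow> 'f set \<Rightarrow> ('f \<Rightarrow> nat) \<Rightarrow> ('f \<Rightarrow> nat) \<Rightarrow> bool" where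
  "arg_sep F C ar na \<longleftrightarrow> (\<forall>f\<in>F. na f \<le> ar f \<and> (f \<in> C \<longrightarrow> na f = 0))"

definition nrm_succ :: "('f \<Rightarrow> nat) \<Rightarrow> ('f,'v,'x) lgraph_scheme \<Rightarrow> 'v \<Rightarrow> 'v set" where
  "nrm_succ na G v = (case lab G v of None \<Rightarrow> {}
     | Some f \<Rightarrow> {att G v ! i | i. i < na f \<and> i < length (att G v)})"

definition safe_succ :: "('f \<Rightarrow> nat) \<Rightarrow> ('f,'v,'x) lgraph_scheme \<Rightarrow> 'v \<Rightarrow> 'v set" where
  "safe_succ na G v = (case lab G v of None \<Rightarrow> {}
     | Some f \<Rightarrow> {att G v ! i | i. na f \<le> i \<and> i < length (att G v)})"

definition is_path :: "('f,'v,'x) lgraph_scheme \<Rightarrow> 'v list \<Rightarrow> nat list \<Rightarrow> bool" where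
  "is_path G vs ms \<longleftrightarrow> vs \<noteq> [] \<and> set vs \<subseteq> nodes G \<and> length ms = length vs - 1 \<and>
     (\<forall>j < length ms. ms ! j < length (att G (vs ! j)) \<and> vs ! Suc j = att G (vs ! j) ! (ms ! j))"

definition safe_path :: "('f \<Rightarrow> nat) \<Rightarrow> ('f,'v,'x) lgraph_scheme \<Rightarrow> 'v list \<Rightarrow> bool" where
  "safe_path na G vs \<longleftrightarrow> (\<forall>j. Suc j < length vs \<longrightarrow> vs ! Suc j \<in> safe_succ na G (vs ! j))"

inductive nrm_at :: "'f set \<Rightarrow> ('f \<Rightarrow> nat) \<Rightarrow> ('f,'v,'x) lgraph_scheme \<Rightarrow> 'v \<Rightarrow> bool"
  for C na G where
  constr: "tgC C G v \<Longrightarrow> nrm_at C na G v"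
| sep: "(\<forall>u\<in>nrm_succ na G v. tgC C G u) \<Longrightarrow> (\<forall>u\<in>safe_succ na G v. nrm_at C na G u)
        \<Longrightarrow> nrm_at C na G v"

definition tg_nrm :: "'f set \<Rightarrow> 'f set \<Rightarrow> ('f \<Rightarrow> nat) \<Rightarrow> ('f \<Rightarrow> nat) \<Rightarrow> ('f,'v) tgraph \<Rightarrow> bool" where
  "tg_nrm F C ar na G \<longleftrightarrow> is_tg F ar G \<and> nrm_at C na G (root G)"

definition hom :: "('f,'w,'x) lgraph_scheme \<Rightarrow> 'w \<Rightarrow> ('f,'v,'y) lgraph_scheme \<Rightarrow> ('w \<Rightarrow> 'v) \<Rightarrow> bool" where
  "hom K l G \<phi> \<longleftrightarrow> (\<forall>v\<in>reach K l. \<phi> v \<in> nodes G \<and>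
      (lab K v \<noteq> None \<longrightarrow> lab G (\<phi> v) = lab K v \<and> att G (\<phi> v) = map \<phi> (att K v)))"

definition is_rule :: "'f set \<Rightarrow> ('f \<Rightarrow> nat) \<Rightarrow> ('f,'w) lgraph \<times> 'w \<times> 'w \<Rightarrow> bool" where
  "is_rule F ar \<rho> = (case \<rho> of (K,l,r) \<Rightarrow>
     wf_lgraph F ar K \<and> l \<in> nodes K \<and> r \<in> nodes K \<and> l \<noteq> r \<and>
     (\<forall>v\<in>reach K r. lab K v = None \<longrightarrow> v \<in> reach K l))"

definition basic_at :: "'f set \<Rightarrow> 'f set \<Rightarrow> ('f,'v,'x) lgraph_scheme \<Rightarrow> 'v \<Rightarrow> bool" where
  "basic_at F C K l \<longleftrightarrow> (\<exists>f. lab K l = Some f \<and> f \<in> F - C) \<and> (\<forall>u\<in>set (att K l). tgC C K u)"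

definition constructor_grs :: "'f set \<Rightarrow> 'f set \<Rightarrow> ('f \<Rightarrow> nat) \<Rightarrow> (('f,'w) lgraph \<times> 'w \<times> 'w) set \<Rightarrow> bool" where
  "constructor_grs F C ar R \<longleftrightarrow> (\<forall>(K,l,r)\<in>R. is_rule F ar (K,l,r) \<and> basic_at F C K l)"

text \<open>Result of the rewrite step: build (new nodes named by the injection psi, fresh for G),
  redirection of all edges into phi(l) (and the root) to the image of r, garbage collection.\<close>
definition rewrite_result :: "('f,'v) tgraph \<Rightarrow> ('f,'w) lgraph \<Rightarrow> 'w \<Rightarrow> 'w \<Rightarrow> ('w \<Rightarrow> 'v) \<Rightarrow> ('w \<Rightarrow> 'v)
    \<Rightarrow> ('f,'v) tgraph" where
  "rewrite_result G K l r \<phi> \<psi> =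
    (let N = reach K r - reach K l;
         m = (\<lambda>n. if n \<in> reach K l then \<phi> n else \<psi> n);
         redir = (\<lambda>u. if u = \<phi> l then m r else u);
         lab1 = (\<lambda>x. if x \<in> \<psi> ` N then lab K (the_inv_into N \<psi> x) else lab G x);
         att1 = (\<lambda>x. if x \<in> \<psi> ` N then map m (att K (the_inv_into N \<psi> x)) else att G x);
         G2 = \<lparr> nodes = nodes G \<union> \<psi> ` N, lab = lab1, att = (\<lambda>x. map redir (att1 x)),
                root = (if root G = \<phi> l then m r else root G) \<rparr>
     in sub G2 (root G2))"

definition rstep :: "(('f,'w) lgraph \<times> 'w \<times> 'w) set \<Rightarrow> ('f,'v) tgraph \<Rightarrow> ('f,'v) tgraph \<Rightarrow> bool" where
  "rstep R G H \<longleftrightarrow> (\<exists>K l r \<phi> \<psi>. (K,l,r) \<in> R \<and> hom K l G \<phi> \<and>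
     inj_on \<psi> (reach K r - reach K l) \<and> \<psi> ` (reach K r - reach K l) \<inter> nodes G = {} \<and>
     H = rewrite_result G K l r \<phi> \<psi>)"

text \<open>(f,g) in P means f is below g in the precedence.\<close>
definition precedence :: "'f set \<Rightarrow> 'f set \<Rightarrow> ('f \<times> 'f) set \<Rightarrow> bool" where
  "precedence F C P \<longleftrightarrow> P \<subseteq> F \<times> F \<and> wf P \<and> trans P \<and> (\<forall>c\<in>C. \<forall>f. (f,c) \<notin> P)"

text \<open>pt P na K h g: K restricted to h is below K restricted to g (sub-term graphs of the common
  graph K are identified with their roots).\<close>
inductive pt :: "('f \<times> 'f) set \<Rightarrow> ('f \<Rightarrow> nat) \<Rightarrow> ('f,'w,'x) lgraph_scheme \<Rightarrow> 'w \<Rightarrow> 'w \<Rightarrow> bool"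
  for P na K where
  sub_arg: "(\<forall>u\<in>reach K h. \<forall>f. lab K u = Some f \<longrightarrow> (\<exists>g'. lab K g = Some g' \<and> (f,g') \<in> P))
     \<Longrightarrow> (\<exists>u\<in>set (att K g). h = u \<or> pt P na K h u) \<Longrightarrow> pt P na K h g"
| sep: "(\<forall>u\<in>reach K h. \<forall>f. lab K u = Some f \<longrightarrow> (\<exists>g'. lab K g = Some g' \<and> (f,g') \<in> P))
     \<Longrightarrow> lab K h \<noteq> None
     \<Longrightarrow> (\<forall>v\<in>nrm_succ na K h. \<exists>w\<in>nrm_succ na K g. v \<in> reach K w)
     \<Longrightarrow> (\<forall>v\<in>safe_succ na K h. pt P na K v g) \<Longrightarrow> pt P na K h g"

definition pt_terminating :: "'f set \<Rightarrow> 'f set \<Rightarrow> ('f \<Rightarrow> nat) \<Rightarrow> (('f,'w) lgraph \<times> 'w \<times> 'w) set \<Rightarrow> bool" where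
  "pt_terminating F C na R \<longleftrightarrow> (\<exists>P. precedence F C P \<and> (\<forall>(K,l,r)\<in>R. pt P na K r l))"

end

theory Submission
  imports Defs
begin


lemma reach_refl[simp]: "v \<in> reach G v" by (simp add: reach_def)

lemma reach_trans: "u \<in> reach G v \<Longrightarrow> w \<in> reach G u \<Longrightarrow> w \<in> reach G v"
  unfolding reach_def by (auto intro: rtrancl_trans)

lemma reach_step: "v \<in> nodes G \<Longrightarrow> u \<in> set (att G v) \<Longrightarrow> w \<in> reach G u \<Longrightarrow> w \<in> reach G v"
  unfolding reach_def edge_rel_def by (auto intro: converse_rtrancl_into_rtrancl)

lemma reach_cases: "u \<in> reach G v \<Longrightarrow> u = v \<or> (v \<in> nodes G \<and> (\<exists>c\<in>set (att G v). u \<in> reach G c))"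
  unfolding reach_def edge_rel_def
  apply simp
  apply (erule converse_rtranclE)
   apply auto
  done

lemma reach_in_nodes: assumes "wf_lgraph F ar G" "v \<in> nodes G" shows "reach G v \<subseteq> nodes G"
proof
  fix u assume "u \<in> reach G v"
  then have "(v,u) \<in> (edge_rel G)\<^sup>*" by (simp add: reach_def)
  then show "u \<in> nodes G"
    by (induction rule: rtrancl_induct) (use assms in \<open>auto simp: edge_rel_def wf_lgraph_def\<close>)
qed

definition agree :: "('f,'v,'x) lgraph_scheme \<Rightarrow> ('f,'v,'y) lgraph_scheme \<Rightarrow> 'v set \<Rightarrow> bool" where
  "agree G H X \<longleftrightarrow> (\<forall>x\<in>X. (x \<in> nodes H \<longleftrightarrow> x \<in> nodes G) \<and> lab H x = lab G x \<and> att H x = att G x)"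

lemma agree_reach:
  assumes cl: "\<forall>x\<in>X. set (att G x) \<subseteq> X" and ag: "agree G H X" and v: "v \<in> X"
  shows "reach H v = reach G v" "reach G v \<subseteq> X"
proof -
  have 1: "u \<in> X \<and> (v,u) \<in> (edge_rel H)\<^sup>*" if "(v,u) \<in> (edge_rel G)\<^sup>*" for u
    using that
  proof (induction rule: rtrancl_induct)
    case base then show ?case using v by simp
  next
    case (step a b)
    then have "a \<in> X" "a \<in> nodes G" "b \<in> set (att G a)" by (auto simp: edge_rel_def)
    with cl ag have "b \<in> X" "(a,b) \<in> edge_rel H" by (auto simp: agree_def edge_rel_def)
    with step show ?case by (auto intro: rtrancl_into_rtrancl)
  qed
  have 2: "u \<in> X \<and> (v,u) \<in> (edge_rel G)\<^sup>*" if "(v,u) \<in> (edge_rel H)\<^sup>*" for u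
    using that
  proof (induction rule: rtrancl_induct)
    case base then show ?case using v by simp
  next
    case (step a b)
    then have "a \<in> X" "a \<in> nodes H" "b \<in> set (att H a)" by (auto simp: edge_rel_def)
    with cl ag have "b \<in> X" "(a,b) \<in> edge_rel G" by (auto simp: agree_def edge_rel_def)
    with step show ?case by (auto intro: rtrancl_into_rtrancl)
  qed
  show "reach H v = reach G v" using 1 2 by (auto simp: reach_def)
  show "reach G v \<subseteq> X" using 1 by (auto simp: reach_def)
qed

lemma tgC_agree:
  assumes "\<forall>x\<in>X. set (att G x) \<subseteq> X" "agree G H X" "v \<in> X" "tgC C G v"
  shows "tgC C H v"
  using agree_reach[OF assms(1-3)] assms(2,4) unfolding tgC_def agree_def by auto

lemma succ_map:
  assumes "lab H x = lab G x" "att H x = map g (att G x)"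
  shows "nrm_succ na H x = g ` nrm_succ na G x" "safe_succ na H x = g ` safe_succ na G x"
  using assms by (cases "lab G x"; force simp: nrm_succ_def safe_succ_def)+

lemma succ_map2:
  fixes H :: "('f,'v,'y) lgraph_scheme" and G :: "('f,'w,'x) lgraph_scheme"
  assumes "lab H y = lab G x" "att H y = map g (att G x)"
  shows "nrm_succ na H y = g ` nrm_succ na G x" "safe_succ na H y = g ` safe_succ na G x"
  using assms by (cases "lab G x"; force simp: nrm_succ_def safe_succ_def)+

lemma succ_sub: "nrm_succ na G x \<subseteq> set (att G x)" "safe_succ na G x \<subseteq> set (att G x)"
  by (auto simp: nrm_succ_def safe_succ_def split: option.splits)

lemma nrm_agree:
  assumes "nrm_at C na G v" "\<forall>x\<in>X. set (att G x) \<subseteq> X" "agree G H X" "v \<in> X"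
  shows "nrm_at C na H v"
  using assms(1,4)
proof (induction rule: nrm_at.induct)
  case (constr v)
  have "tgC C H v" using tgC_agree[OF assms(2,3) constr.prems constr.hyps] .
  then show ?case by (rule nrm_at.constr)
next
  case (sep v)
  have sm: "nrm_succ na H v = id ` nrm_succ na G v" "safe_succ na H v = id ` safe_succ na G v"
    using assms(3) sep.prems unfolding agree_def by (metis succ_map list.map_id0 id_apply)+
  have inX: "set (att G v) \<subseteq> X" using assms(2) sep.prems by blast
  show ?case
  proof (rule nrm_at.sep)
    show "\<forall>u\<in>nrm_succ na H v. tgC C H u"
      using sm sep.hyps(1) succ_sub inX tgC_agree[OF assms(2,3)] by fastforce
    show "\<forall>u\<in>safe_succ na H v. nrm_at C na H u"
      using sm sep.IH succ_sub inX by fastforce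
  qed
qed

lemma tgC_down: "tgC C G v \<Longrightarrow> u \<in> reach G v \<Longrightarrow> tgC C G u"
  unfolding tgC_def by (meson reach_trans)

lemma succ_cover:
  assumes "wf_lgraph F ar G" "x \<in> nodes G" "c \<in> set (att G x)"
  shows "c \<in> nrm_succ na G x \<or> c \<in> safe_succ na G x"
proof -
  obtain i where i: "i < length (att G x)" "c = att G x ! i" using assms(3) by (auto simp: in_set_conv_nth)
  show ?thesis
  proof (cases "lab G x")
    case None
    then show ?thesis using assms i by (auto simp: wf_lgraph_def)
  next
    case (Some g)
    then show ?thesis using i by (cases "i < na g") (auto simp: nrm_succ_def safe_succ_def)
  qed
qed

lemma nrm_down:
  assumes wf: "wf_lgraph F ar G" and "nrm_at C na G x"
  shows "\<forall>y\<in>reach G x. nrm_at C na G y"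
  using assms(2)
proof (induction rule: nrm_at.induct)
  case (constr v)
  show ?case
  proof
    fix y assume "y \<in> reach G v"
    then have "tgC C G y" by (rule tgC_down[OF constr.hyps])
    then show "nrm_at C na G y" by (rule nrm_at.constr)
  qed
next
  case (sep v)
  show ?case
  proof
    fix y assume "y \<in> reach G v"
    from reach_cases[OF this] show "nrm_at C na G y"
    proof
      assume "y = v"
      have "\<forall>u\<in>safe_succ na G v. nrm_at C na G u" using sep.IH by blast
      then show ?thesis using nrm_at.sep[OF sep.hyps(1)] \<open>y = v\<close> by simp
    next
      assume "v \<in> nodes G \<and> (\<exists>c\<in>set (att G v). y \<in> reach G c)"
      then obtain c where c: "v \<in> nodes G" "c \<in> set (att G v)" "y \<in> reach G c" by blast
      from succ_cover[OF wf c(1,2)] show ?thesis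
      proof
        assume "c \<in> nrm_succ na G v"
        then have "tgC C G c" using sep.hyps by blast
        then have "tgC C G y" using c(3) by (rule tgC_down)
        then show ?thesis by (rule nrm_at.constr)
      next
        assume "c \<in> safe_succ na G v"
        then show ?thesis using sep.IH c(3) by blast
      qed
    qed
  qed
qed



lemma allnrm: "is_tg F ar G \<Longrightarrow> nrm_at C na G (root G) \<Longrightarrow> x \<in> nodes G \<Longrightarrow> nrm_at C na G x"
  using nrm_down[of F ar G C na "root G"] unfolding is_tg_def by blast

lemma path_facts:
  assumes "is_path G vs ms"
  shows "vs \<noteq> []" "set vs \<subseteq> nodes G" "length ms = length vs - 1"
    "\<And>j. j < length ms \<Longrightarrow> ms ! j < length (att G (vs ! j)) \<and> vs ! Suc j = att G (vs ! j) ! (ms ! j)"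
  using assms unfolding is_path_def by blast+

lemma path_reach:
  assumes p: "is_path G vs ms" and "k < length vs" "i \<le> k"
  shows "vs ! k \<in> reach G (vs ! i)"
  using assms(2,3)
proof (induction k)
  case 0 then show ?case by simp
next
  case (Suc k)
  show ?case
  proof (cases "i = Suc k")
    case True then show ?thesis by simp
  next
    case False
    with Suc have ih: "vs ! k \<in> reach G (vs ! i)" by simp
    have k: "k < length ms" using path_facts(3)[OF p] Suc.prems by simp
    have c: "ms ! k < length (att G (vs ! k))" "vs ! Suc k = att G (vs ! k) ! (ms ! k)"
      using path_facts(4)[OF p k] by blast+
    have "vs ! k \<in> set vs" using Suc.prems by simp
    then have vn: "vs ! k \<in> nodes G" using path_facts(2)[OF p] by blast
    have "vs ! Suc k \<in> set (att G (vs ! k))" using c by simp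
    then have "vs ! Suc k \<in> reach G (vs ! k)"
      using reach_step[OF vn _ reach_refl] by blast
    then show ?thesis by (rule reach_trans[OF ih])
  qed
qed

lemma part1:
  assumes tg: "is_tg F ar G" and nr: "nrm_at C na G (root G)" and lx: "lab G x = Some f" and fC: "f \<notin> C"
    and p: "is_path G vs ms" and lst: "last vs = x"
  shows "safe_path na G vs"
  unfolding safe_path_def
proof (intro allI impI)
  fix j assume j: "Suc j < length vs"
  have ne: "vs \<noteq> []" using path_facts(1)[OF p] .
  have "last vs = vs ! (length vs - 1)" using ne by (simp add: last_conv_nth)
  then have xr: "x \<in> reach G (vs ! Suc j)"
    using path_reach[OF p, of "length vs - 1" "Suc j"] j lst by simp
  have jm: "j < length ms" using path_facts(3)[OF p] j by simp
  have c: "ms ! j < length (att G (vs ! j))" "vs ! Suc j = att G (vs ! j) ! (ms ! j)"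
    using path_facts(4)[OF p jm] by blast+
  have "vs ! j \<in> set vs" using j by simp
  then have vn: "vs ! j \<in> nodes G" using path_facts(2)[OF p] by blast
  have cin: "vs ! Suc j \<in> set (att G (vs ! j))" using c by simp
  have ntg: "\<not> tgC C G y" if "x \<in> reach G y" for y using that lx fC unfolding tgC_def by blast
  have "nrm_at C na G (vs ! j)" using allnrm[OF tg nr vn] .
  moreover have "\<not> tgC C G (vs ! j)" using ntg reach_step[OF vn cin xr] by blast
  ultimately have "\<forall>u\<in>nrm_succ na G (vs ! j). tgC C G u"
    by (cases rule: nrm_at.cases) auto
  moreover have wf: "wf_lgraph F ar G" using tg by (simp add: is_tg_def)
  ultimately show "vs ! Suc j \<in> safe_succ na G (vs ! j)"
    using succ_cover[OF wf vn cin] ntg[OF xr] by blast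
qed

lemma pt_lab: "pt P na K h g \<Longrightarrow> u \<in> reach K h \<Longrightarrow> lab K u = Some f' \<Longrightarrow> \<exists>g'. lab K g = Some g' \<and> (f',g') \<in> P"
  by (erule pt.cases) auto

lemma pt_tgC_reach:
  assumes "pt P na K h g" "wf_lgraph F ar K" "precedence F C P"
  shows "g \<in> nodes K \<Longrightarrow> tgC C K g \<Longrightarrow> h \<in> reach K g"
  using assms(1)
proof (induction rule: pt.induct)
  case (sub_arg h g)
  then obtain u where u: "u \<in> set (att K g)" "h = u \<or> (pt P na K h u \<and> (u \<in> nodes K \<longrightarrow> tgC C K u \<longrightarrow> h \<in> reach K u))"
    by blast
  have un: "u \<in> nodes K" using assms(2) sub_arg.prems u(1) by (auto simp: wf_lgraph_def)
  have "tgC C K u" using tgC_down[OF sub_arg.prems(2) reach_step[OF sub_arg.prems(1) u(1) reach_refl]] .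
  then have "h \<in> reach K u" using u un by auto
  then show ?case using reach_step[OF sub_arg.prems(1) u(1)] by blast
next
  case (sep h g)
  then obtain f' where "lab K h = Some f'" by auto
  with sep.hyps(1) obtain g' where "lab K g = Some g'" "(f',g') \<in> P" by fastforce
  moreover have "g' \<in> C" using sep.prems(2) \<open>lab K g = Some g'\<close> by (auto simp: tgC_def)
  ultimately show ?case using assms(3) by (auto simp: precedence_def)
qed

locale rwctx =
  fixes F C :: "'f set" and ar na :: "'f \<Rightarrow> nat" and G :: "('f,'v) tgraph"
    and K :: "('f,'w) lgraph" and l r :: 'w and \<phi> \<psi> :: "'w \<Rightarrow> 'v" and P :: "('f \<times> 'f) set" and f :: 'f
  assumes G_tg: "is_tg F ar G" and G_nrm: "nrm_at C na G (root G)"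
   and rule: "is_rule F ar (K,l,r)" and basic: "basic_at F C K l"
   and hom: "hom K l G \<phi>" and inj: "inj_on \<psi> (reach K r - reach K l)"
   and fresh: "\<psi> ` (reach K r - reach K l) \<inter> nodes G = {}"
   and prec: "precedence F C P" and ptr: "pt P na K r l"
   and labl: "lab K l = Some f" and fC: "f \<notin> C"
begin

definition "N = reach K r - reach K l"
definition "m = (\<lambda>n. if n \<in> reach K l then \<phi> n else \<psi> n)"
definition "redir = (\<lambda>u. if u = \<phi> l then m r else u)"
definition "lab1 = (\<lambda>x. if x \<in> \<psi> ` N then lab K (the_inv_into N \<psi> x) else lab G x)"
definition "att1 = (\<lambda>x. if x \<in> \<psi> ` N then map m (att K (the_inv_into N \<psi> x)) else att G x)"
definition "G2 = \<lparr> nodes = nodes G \<union> \<psi> ` N, lab = lab1, att = (\<lambda>x. map redir (att1 x)),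
                root = (if root G = \<phi> l then m r else root G) \<rparr>"

lemma rr: "rewrite_result G K l r \<phi> \<psi> = sub G2 (root G2)"
  unfolding rewrite_result_def Let_def G2_def N_def m_def redir_def lab1_def att1_def by simp

lemma wfG: "wf_lgraph F ar G" using G_tg by (simp add: is_tg_def)
lemma wfK: "wf_lgraph F ar K" using rule by (simp add: is_rule_def)
lemma lK: "l \<in> nodes K" and rK: "r \<in> nodes K" and lr: "l \<noteq> r" using rule by (auto simp: is_rule_def)
lemma acG: "acyclic (edge_rel G)" using wfG by (simp add: wf_lgraph_def)
lemma acK: "acyclic (edge_rel K)" using wfK by (simp add: wf_lgraph_def)
lemma nrmG: "x \<in> nodes G \<Longrightarrow> nrm_at C na G x" using allnrm[OF G_tg G_nrm] .

lemma attG: "x \<in> nodes G \<Longrightarrow> set (att G x) \<subseteq> nodes G" using wfG by (auto simp: wf_lgraph_def)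
lemma attK: "x \<in> nodes K \<Longrightarrow> set (att K x) \<subseteq> nodes K" using wfK by (auto simp: wf_lgraph_def)

lemma phi_nodes: "w \<in> reach K l \<Longrightarrow> \<phi> w \<in> nodes G" using hom by (auto simp: hom_def)

lemma hom_edge:
  assumes "a \<in> reach K l" "(a,b) \<in> edge_rel K" shows "(\<phi> a, \<phi> b) \<in> edge_rel G"
proof -
  have a: "a \<in> nodes K" "b \<in> set (att K a)" using assms(2) by (auto simp: edge_rel_def)
  have "case lab K a of None \<Rightarrow> att K a = [] | Some f \<Rightarrow> f \<in> F \<and> length (att K a) = ar f"
    using wfK a(1) by (simp add: wf_lgraph_def)
  then have "lab K a \<noteq> None" using a(2) by (cases "lab K a") auto
  then have "att G (\<phi> a) = map \<phi> (att K a)" "\<phi> a \<in> nodes G" using hom assms(1) by (auto simp: hom_def)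
  then show ?thesis using a by (auto simp: edge_rel_def)
qed

lemma hom_trancl: "(a,b) \<in> (edge_rel K)\<^sup>+ \<Longrightarrow> a \<in> reach K l \<Longrightarrow> (\<phi> a, \<phi> b) \<in> (edge_rel G)\<^sup>+"
proof (induction rule: trancl_induct)
  case (base y) then show ?case using hom_edge by blast
next
  case (step y z)
  have "y \<in> reach K l" using step.prems step.hyps(1) by (auto simp: reach_def intro: rtrancl_trans)
  then show ?case using step hom_edge by (meson trancl_into_trancl)
qed

lemma hom_reach: "a \<in> reach K l \<Longrightarrow> b \<in> reach K a \<Longrightarrow> \<phi> b \<in> reach G (\<phi> a)"
proof -
  assume a: "a \<in> reach K l" "b \<in> reach K a"
  then have "a = b \<or> (a,b) \<in> (edge_rel K)\<^sup>+" unfolding reach_def by (auto dest: rtranclD)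
  then show ?thesis
  proof
    assume "(a,b) \<in> (edge_rel K)\<^sup>+"
    then have "(\<phi> a, \<phi> b) \<in> (edge_rel G)\<^sup>+" using hom_trancl a(1) by blast
    then show ?thesis unfolding reach_def by auto
  qed simp
qed

lemma phi_ne:
  assumes "w \<in> reach K l" "w \<noteq> l"
  shows "\<phi> w \<noteq> \<phi> l" "\<phi> w \<in> reach G (\<phi> l)" "\<phi> l \<notin> reach G (\<phi> w)"
proof -
  have t: "(\<phi> l, \<phi> w) \<in> (edge_rel G)\<^sup>+"
    using assms hom_trancl[of l w] by (auto simp: reach_def dest: rtranclD)
  then show "\<phi> w \<noteq> \<phi> l" using acG by (auto simp: acyclic_def)
  show "\<phi> w \<in> reach G (\<phi> l)" using t by (simp add: reach_def)
  show "\<phi> l \<notin> reach G (\<phi> w)" using t acG unfolding reach_def acyclic_def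
    by (meson mem_Collect_eq trancl_rtrancl_trancl)
qed

lemma labGl: "lab G (\<phi> l) = Some f" using hom labl by (auto simp: hom_def)
lemma attGl: "att G (\<phi> l) = map \<phi> (att K l)" using hom labl by (auto simp: hom_def)

lemma ntg: "\<phi> l \<in> reach G x \<Longrightarrow> \<not> tgC C G x" using labGl fC by (auto simp: tgC_def)

lemma l_notin_r: "l \<notin> reach K r"
proof
  assume "l \<in> reach K r"
  from pt_lab[OF ptr this labl] have "(f,f) \<in> P" using labl by auto
  then show False using prec by (auto simp: precedence_def)
qed

lemma pt_ne: "pt P na K h l \<Longrightarrow> h \<noteq> l"
  using pt_lab[of P na K h l l f] labl prec by (auto simp: precedence_def)

lemma reachK_nodes: "x \<in> nodes K \<Longrightarrow> reach K x \<subseteq> nodes K" using reach_in_nodes[OF wfK] .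
lemma reachG_nodes: "x \<in> nodes G \<Longrightarrow> reach G x \<subseteq> nodes G" using reach_in_nodes[OF wfG] .

lemma N_nodes: "N \<subseteq> nodes K" using reachK_nodes[OF rK] by (auto simp: N_def)
lemma inv_psi: "n \<in> N \<Longrightarrow> the_inv_into N \<psi> (\<psi> n) = n" using inj the_inv_into_f_f by (metis N_def)
lemma psi_fresh: "n \<in> N \<Longrightarrow> \<psi> n \<notin> nodes G" using fresh by (auto simp: N_def)

lemma nodes_G2[simp]: "nodes G2 = nodes G \<union> \<psi> ` N" by (simp add: G2_def)
lemma root_G2: "root G2 = (if root G = \<phi> l then m r else root G)" by (simp add: G2_def)
lemma old_G2: "x \<in> nodes G \<Longrightarrow> lab G2 x = lab G x \<and> att G2 x = map redir (att G x)"
  using fresh by (auto simp: G2_def lab1_def att1_def N_def)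
lemma new_G2: "n \<in> N \<Longrightarrow> lab G2 (\<psi> n) = lab K n \<and> att G2 (\<psi> n) = map redir (map m (att K n))"
  using inv_psi by (auto simp: G2_def lab1_def att1_def)

lemma agree_old:
  assumes "x \<in> nodes G" "\<phi> l \<notin> reach G x"
  shows "\<forall>y\<in>reach G x. set (att G y) \<subseteq> reach G x" "agree G G2 (reach G x)"
proof -
  show cl: "\<forall>y\<in>reach G x. set (att G y) \<subseteq> reach G x"
    using reachG_nodes[OF assms(1)] reach_step reach_trans by (metis reach_refl subset_iff)
  show "agree G G2 (reach G x)"
    unfolding agree_def
  proof
    fix y assume y: "y \<in> reach G x"
    then have yn: "y \<in> nodes G" using reachG_nodes[OF assms(1)] by blast
    have "\<forall>w\<in>set (att G y). w \<noteq> \<phi> l" using cl y assms(2) by blast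
    then have "map redir (att G y) = att G y" by (auto simp: redir_def intro!: map_idI)
    then show "(y \<in> nodes G2 \<longleftrightarrow> y \<in> nodes G) \<and> lab G2 y = lab G y \<and> att G2 y = att G y"
      using old_G2[OF yn] yn by simp
  qed
qed

lemma nrm_old: "x \<in> nodes G \<Longrightarrow> \<phi> l \<notin> reach G x \<Longrightarrow> nrm_at C na G2 x"
  using nrm_agree[OF nrmG agree_old] by simp

lemma tgC_old: "x \<in> nodes G \<Longrightarrow> \<phi> l \<notin> reach G x \<Longrightarrow> tgC C G x \<Longrightarrow> tgC C G2 x"
  using tgC_agree[OF agree_old] by simp

lemma old_phi: "h \<in> reach K l \<Longrightarrow> h \<noteq> l \<Longrightarrow> nrm_at C na G2 (m h)"
  using nrm_old[OF phi_nodes phi_ne(3)] by (simp add: m_def)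

lemma child_ne: "w \<in> set (att K l) \<Longrightarrow> v \<in> reach K w \<Longrightarrow> v \<noteq> l"
proof
  assume a: "w \<in> set (att K l)" "v \<in> reach K w" "v = l"
  then have "(l,w) \<in> edge_rel K" "(w,l) \<in> (edge_rel K)\<^sup>*" using lK by (auto simp: edge_rel_def reach_def)
  then have "(l,l) \<in> (edge_rel K)\<^sup>+" by auto
  then show False using acK by (auto simp: acyclic_def)
qed

lemma phil_nrm_tgC: "u \<in> nrm_succ na G (\<phi> l) \<Longrightarrow> tgC C G u"
proof -
  have "nrm_at C na G (\<phi> l)" using nrmG phi_nodes lK by simp
  moreover have "\<not> tgC C G (\<phi> l)" using ntg by simp
  ultimately show "u \<in> nrm_succ na G (\<phi> l) \<Longrightarrow> tgC C G u" by (cases rule: nrm_at.cases) auto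
qed

lemma key:
  assumes "pt P na K h g" shows "g = l \<Longrightarrow> h \<in> reach K r \<Longrightarrow> nrm_at C na G2 (m h)"
  using assms
proof (induction rule: pt.induct)
  case (sub_arg h g)
  then obtain u where u: "u \<in> set (att K l)" "h = u \<or> pt P na K h u" by blast
  have un: "u \<in> nodes K" using attK lK u(1) by blast
  have "tgC C K u" using basic u(1) by (auto simp: basic_at_def)
  then have hu: "h \<in> reach K u" using u(2) pt_tgC_reach[OF _ wfK prec un] by auto
  then show ?case using old_phi reach_step[OF lK u(1) hu] child_ne[OF u(1) hu] by blast
next
  case (sep h g)
  then obtain f' where f': "lab K h = Some f'" by auto
  show ?case
  proof (cases "h \<in> reach K l")
    case True
    have "h \<noteq> l" using sep.hyps(1) sep.prems(1) f' labl prec by (fastforce simp: precedence_def)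
    then show ?thesis using old_phi True by blast
  next
    case False
    then have hN: "h \<in> N" using sep.prems by (simp add: N_def)
    have mh: "m h = \<psi> h" using False by (simp add: m_def)
    have hn: "h \<in> nodes K" using hN N_nodes by blast
    have sm1: "nrm_succ na G2 (\<psi> h) = (redir \<circ> m) ` nrm_succ na K h"
      by (rule succ_map2(1); simp add: new_G2[OF hN])
    have sm2: "safe_succ na G2 (\<psi> h) = (redir \<circ> m) ` safe_succ na K h"
      by (rule succ_map2(2); simp add: new_G2[OF hN])
    note sm = sm1 sm2
    have smG: "nrm_succ na G (\<phi> l) = \<phi> ` nrm_succ na K l"
      by (rule succ_map2(1); simp add: labGl attGl labl)
    show ?thesis unfolding mh
    proof (rule nrm_at.sep)
      show "\<forall>u\<in>nrm_succ na G2 (\<psi> h). tgC C G2 u"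
      proof
        fix u assume "u \<in> nrm_succ na G2 (\<psi> h)"
        then obtain v where v: "v \<in> nrm_succ na K h" "u = redir (m v)" using sm by auto
        then obtain w where w: "w \<in> nrm_succ na K l" "v \<in> reach K w" using sep.hyps(3) sep.prems(1) by blast
        have wa: "w \<in> set (att K l)" using w(1) succ_sub(1)[of na K l] by blast
        have vl: "v \<in> reach K l" using reach_step[OF lK wa w(2)] .
        have vne: "v \<noteq> l" using child_ne[OF wa w(2)] .
        have u': "u = \<phi> v" using v(2) phi_ne[OF vl vne] vl by (simp add: m_def redir_def)
        have "\<phi> w \<in> nrm_succ na G (\<phi> l)" using smG w(1) by simp
        then have "tgC C G (\<phi> w)" by (rule phil_nrm_tgC)
        moreover have "\<phi> v \<in> reach G (\<phi> w)" by (rule hom_reach[OF reach_step[OF lK wa reach_refl] w(2)])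
        ultimately have "tgC C G (\<phi> v)" by (rule tgC_down)
        then show "tgC C G2 u" using tgC_old[OF phi_nodes[OF vl] phi_ne(3)[OF vl vne]] u' by simp
      qed
      show "\<forall>u\<in>safe_succ na G2 (\<psi> h). nrm_at C na G2 u"
      proof
        fix u assume "u \<in> safe_succ na G2 (\<psi> h)"
        then obtain v where v: "v \<in> safe_succ na K h" "u = redir (m v)" using sm by auto
        have va: "v \<in> set (att K h)" using v(1) succ_sub(2)[of na K h] by blast
        have vr: "v \<in> reach K r" using reach_trans[OF sep.prems(2) reach_step[OF hn va reach_refl]] .
        have ptv: "pt P na K v l" and ih: "nrm_at C na G2 (m v)" using sep.IH v(1) sep.prems vr by auto
        have "m v \<noteq> \<phi> l"
        proof (cases "v \<in> reach K l")
          case True then show ?thesis using phi_ne(1)[OF True pt_ne[OF ptv]] by (simp add: m_def)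
        next
          case False
          then have "v \<in> N" using vr by (simp add: N_def)
          then have "\<psi> v \<notin> nodes G" by (rule psi_fresh)
          then show ?thesis using False phi_nodes[OF reach_refl] by (auto simp: m_def)
        qed
        then show "nrm_at C na G2 u" using ih v(2) by (simp add: redir_def)
      qed
    qed
  qed
qed

lemma key_r: "nrm_at C na G2 (m r)" using key[OF ptr] by simp

end


context rwctx begin

lemma nrm_G2_old: "nrm_at C na G x \<Longrightarrow> x \<in> nodes G \<Longrightarrow> x \<noteq> \<phi> l \<Longrightarrow> nrm_at C na G2 x"
proof (induction rule: nrm_at.induct)
  case (constr x)
  then have "\<phi> l \<notin> reach G x" using ntg by blast
  then show ?case using nrm_old constr by blast
next
  case (sep x)
  have sm1: "nrm_succ na G2 x = redir ` nrm_succ na G x"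
    by (rule succ_map(1); simp add: old_G2[OF sep.prems(1)])
  have sm2: "safe_succ na G2 x = redir ` safe_succ na G x"
    by (rule succ_map(2); simp add: old_G2[OF sep.prems(1)])
  note sm = sm1 sm2
  show ?case
  proof (rule nrm_at.sep)
    show "\<forall>u\<in>nrm_succ na G2 x. tgC C G2 u"
    proof
      fix u assume "u \<in> nrm_succ na G2 x"
      then obtain w where w: "w \<in> nrm_succ na G x" "u = redir w" using sm by auto
      have wn: "w \<in> nodes G" using attG[OF sep.prems(1)] succ_sub(1)[of na G x] w(1) by blast
      have tw: "tgC C G w" using sep.hyps(1) w(1) by blast
      then have nr: "\<phi> l \<notin> reach G w" using ntg by blast
      then have "w \<noteq> \<phi> l" using reach_refl by metis
      then show "tgC C G2 u" using w(2) tgC_old[OF wn nr tw] by (simp add: redir_def)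
    qed
    show "\<forall>u\<in>safe_succ na G2 x. nrm_at C na G2 u"
    proof
      fix u assume "u \<in> safe_succ na G2 x"
      then obtain w where w: "w \<in> safe_succ na G x" "u = redir w" using sm by auto
      have wn: "w \<in> nodes G" using attG[OF sep.prems(1)] succ_sub(2)[of na G x] w(1) by blast
      show "nrm_at C na G2 u"
      proof (cases "w = \<phi> l")
        case True then show ?thesis using w(2) key_r by (simp add: redir_def)
      next
        case False then show ?thesis using w sep.IH wn by (simp add: redir_def)
      qed
    qed
  qed
qed

lemma nrm_root: "nrm_at C na G2 (root G2)"
proof -
  have rn: "root G \<in> nodes G" using G_tg by (simp add: is_tg_def)
  show ?thesis
  proof (cases "root G = \<phi> l")
    case True then show ?thesis using key_r by (simp add: root_G2)
  next
    case False then show ?thesis using nrm_G2_old[OF G_nrm rn] by (simp add: root_G2)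
  qed
qed

lemma m_in: "w \<in> reach K r \<Longrightarrow> m w \<in> nodes G2"
  using phi_nodes by (auto simp: m_def N_def)

lemma mr_in: "m r \<in> nodes G2" by (rule m_in[OF reach_refl])

lemma redir_in: "u \<in> nodes G2 \<Longrightarrow> redir u \<in> nodes G2"
  using mr_in by (simp add: redir_def)

lemma att_G2_in: assumes "v \<in> nodes G2" shows "set (att G2 v) \<subseteq> nodes G2"
proof (cases "v \<in> nodes G")
  case True
  then show ?thesis using old_G2[OF True] attG[OF True] redir_in by auto
next
  case False
  then obtain n where n: "n \<in> N" "v = \<psi> n" using assms by auto
  have nn: "n \<in> nodes K" using n N_nodes by blast
  have "w \<in> reach K r" if "w \<in> set (att K n)" for w
    using reach_trans[of n K r w] reach_step[OF nn that reach_refl] n(1) by (auto simp: N_def)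
  then show ?thesis using new_G2[OF n(1)] n(2) m_in redir_in by auto
qed

definition "D = reach G (\<phi> l) - {\<phi> l}"
definition "lev x = (if x \<in> D then 0 else if x \<in> \<psi> ` N then 1 else (2::nat))"
definition "EK = {(\<psi> a, \<psi> b) | a b. a \<in> N \<and> b \<in> N \<and> (a,b) \<in> edge_rel K}"
definition "Q = edge_rel G \<union> EK"

lemma D_nodes: "D \<subseteq> nodes G" using reachG_nodes[OF phi_nodes[OF reach_refl]] by (auto simp: D_def)

lemma cyc: "(a,b) \<in> (edge_rel G)\<^sup>+ \<Longrightarrow> (b,a) \<in> (edge_rel G)\<^sup>* \<Longrightarrow> False"
  using acG by (auto simp: acyclic_def dest: trancl_rtrancl_trancl)

lemma edge_class:
  assumes "(x,y) \<in> edge_rel G2"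
  shows "lev y < lev x \<or> (lev y = lev x \<and> (x,y) \<in> Q)"
proof -
  have xn: "x \<in> nodes G2" and ya: "y \<in> set (att G2 x)" using assms by (auto simp: edge_rel_def)
  have phl: "\<phi> l \<in> nodes G" using phi_nodes by simp
  show ?thesis
  proof (cases "x \<in> nodes G")
    case False
    then obtain n where n: "n \<in> N" "x = \<psi> n" using xn by auto
    have nn: "n \<in> nodes K" using n N_nodes by blast
    obtain w where w: "w \<in> set (att K n)" "y = redir (m w)" using new_G2[OF n(1)] n(2) ya by auto
    have wr: "w \<in> reach K r"
      using reach_trans[of n K r w] reach_step[OF nn w(1) reach_refl] n(1) by (auto simp: N_def)
    have lx: "lev x = 1" using n D_nodes psi_fresh by (auto simp: lev_def)
    show ?thesis
    proof (cases "w \<in> reach K l")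
      case True
      have "w \<noteq> l" using wr l_notin_r by blast
      then have "y = \<phi> w" "\<phi> w \<in> D" using phi_ne[OF True] w(2) True
        by (auto simp: m_def redir_def D_def)
      then show ?thesis using lx by (simp add: lev_def)
    next
      case False
      then have wN: "w \<in> N" using wr by (simp add: N_def)
      have "\<psi> w \<noteq> \<phi> l" using psi_fresh[OF wN] phl by auto
      then have "y = \<psi> w" using w(2) False by (simp add: m_def redir_def)
      moreover have "(x,y) \<in> EK" using n wN nn w(1) calculation by (auto simp: EK_def edge_rel_def)
      moreover have "lev y = 1" using calculation wN D_nodes psi_fresh by (auto simp: lev_def)
      ultimately show ?thesis using lx by (simp add: Q_def)
    qed
  next
    case True
    obtain w where w: "w \<in> set (att G x)" "y = redir w" using old_G2[OF True] ya by auto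
    have ew: "(x,w) \<in> edge_rel G" using True w(1) by (auto simp: edge_rel_def)
    show ?thesis
    proof (cases "x \<in> D")
      case xD: True
      then have t: "(\<phi> l, x) \<in> (edge_rel G)\<^sup>+" by (auto simp: D_def reach_def dest: rtranclD)
      have "w \<noteq> \<phi> l" using cyc[OF t] ew by auto
      moreover have "w \<in> D"
      proof -
        have "(\<phi> l, w) \<in> (edge_rel G)\<^sup>+" using t ew by auto
        then show ?thesis using cyc by (auto simp: D_def reach_def)
      qed
      ultimately show ?thesis using w(2) xD ew by (simp add: redir_def lev_def Q_def)
    next
      case xD: False
      have lx: "lev x = 2" using xD True psi_fresh by (auto simp: lev_def)
      show ?thesis
      proof (cases "w = \<phi> l")
        case True
        then have y: "y = m r" using w(2) by (simp add: redir_def)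
        have "lev (m r) < 2"
        proof (cases "r \<in> reach K l")
          case True
          then have "\<phi> r \<in> D" using phi_ne[OF True] lr by (auto simp: D_def)
          then show ?thesis using True by (simp add: m_def lev_def)
        next
          case False
          then have "r \<in> N" by (simp add: N_def)
          then show ?thesis using False by (auto simp: m_def lev_def)
        qed
        then show ?thesis using y lx by simp
      next
        case False
        then have "y = w" using w(2) by (simp add: redir_def)
        then show ?thesis using lx ew by (auto simp: lev_def Q_def)
      qed
    qed
  qed
qed

lemma lev_trancl: "(x,y) \<in> (edge_rel G2)\<^sup>+ \<Longrightarrow> lev y \<le> lev x \<and> (lev y = lev x \<longrightarrow> (x,y) \<in> Q\<^sup>+)"
proof (induction rule: trancl_induct)
  case (base y) then show ?case using edge_class by fastforce
next
  case (step y z)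
  from edge_class[OF step.hyps(2)] step.IH show ?case
    by (auto intro: trancl_into_trancl)
qed

lemma EK_trancl: "(p,q) \<in> EK\<^sup>+ \<Longrightarrow> \<exists>a b. a \<in> N \<and> b \<in> N \<and> p = \<psi> a \<and> q = \<psi> b \<and> (a,b) \<in> (edge_rel K)\<^sup>+"
proof (induction rule: trancl_induct)
  case (base y) then show ?case by (auto simp: EK_def)
next
  case (step y z)
  then obtain a b where ab: "a \<in> N" "b \<in> N" "p = \<psi> a" "y = \<psi> b" "(a,b) \<in> (edge_rel K)\<^sup>+" by blast
  from step.hyps(2) obtain b' c where bc: "b' \<in> N" "c \<in> N" "y = \<psi> b'" "z = \<psi> c" "(b',c) \<in> edge_rel K"
    by (auto simp: EK_def)
  have "b' = b" using inj ab bc by (metis N_def inj_onD)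
  then have "(a,c) \<in> (edge_rel K)\<^sup>+" using ab(5) bc(5) by auto
  then show ?case using ab bc by blast
qed

lemma Q_split: "(x,y) \<in> Q\<^sup>+ \<Longrightarrow> (x \<in> nodes G \<longrightarrow> (x,y) \<in> (edge_rel G)\<^sup>+) \<and> (x \<notin> nodes G \<longrightarrow> (x,y) \<in> EK\<^sup>+)"
proof (induction rule: trancl_induct)
  case (base y) then show ?case using psi_fresh by (auto simp: Q_def EK_def edge_rel_def)
next
  case (step y z)
  have yG: "y \<in> nodes G" if "(x,y) \<in> (edge_rel G)\<^sup>+"
    using that tranclD2 attG by (fastforce simp: edge_rel_def)
  have yN: "y \<notin> nodes G" if "(x,y) \<in> EK\<^sup>+"
    using that EK_trancl psi_fresh by blast
  show ?case
  proof (cases "x \<in> nodes G")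
    case True
    then have "y \<in> nodes G" using step.IH yG by blast
    then have "(y,z) \<in> edge_rel G" using step.hyps(2) psi_fresh by (auto simp: Q_def EK_def)
    then show ?thesis using step.IH True by auto
  next
    case False
    then have "y \<notin> nodes G" using step.IH yN by blast
    then have "(y,z) \<in> EK" using step.hyps(2) by (auto simp: Q_def edge_rel_def)
    then show ?thesis using step.IH False by auto
  qed
qed

lemma acyclic_G2: "acyclic (edge_rel G2)"
  unfolding acyclic_def
proof (intro allI notI)
  fix x assume "(x,x) \<in> (edge_rel G2)\<^sup>+"
  then have q: "(x,x) \<in> Q\<^sup>+" using lev_trancl by blast
  show False
  proof (cases "x \<in> nodes G")
    case True then show False using Q_split[OF q] acG by (auto simp: acyclic_def)
  next
    case False
    then obtain a b where "a \<in> N" "b \<in> N" "x = \<psi> a" "x = \<psi> b" "(a,b) \<in> (edge_rel K)\<^sup>+"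
      using Q_split[OF q] EK_trancl by blast
    moreover then have "a = b" using inj by (metis N_def inj_onD)
    ultimately show False using acK by (auto simp: acyclic_def)
  qed
qed

lemma wf_G2: "wf_lgraph F ar G2"
  unfolding wf_lgraph_def
proof (intro conjI ballI)
  have "finite (nodes G)" using wfG by (simp add: wf_lgraph_def)
  moreover have "finite N" using N_nodes wfK finite_subset by (auto simp: wf_lgraph_def)
  ultimately show "finite (nodes G2)" by simp
  show "acyclic (edge_rel G2)" by (rule acyclic_G2)
  fix v assume v: "v \<in> nodes G2"
  show "set (att G2 v) \<subseteq> nodes G2" by (rule att_G2_in[OF v])
  show "case lab G2 v of None \<Rightarrow> att G2 v = [] | Some f \<Rightarrow> f \<in> F \<and> length (att G2 v) = ar f"
  proof (cases "v \<in> nodes G")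
    case True
    then show ?thesis using old_G2[OF True] wfG by (auto simp: wf_lgraph_def split: option.splits)
  next
    case False
    then obtain n where n: "n \<in> N" "v = \<psi> n" using v by auto
    have nn: "n \<in> nodes K" using n N_nodes by blast
    then show ?thesis using new_G2[OF n(1)] n(2) wfK by (auto simp: wf_lgraph_def split: option.splits)
  qed
qed

lemma result: "tg_nrm F C ar na (sub G2 (root G2))"
proof -
  let ?S = "sub G2 (root G2)"
  let ?X = "reach G2 (root G2)"
  have rn: "root G2 \<in> nodes G2" using mr_in G_tg by (auto simp: root_G2 is_tg_def)
  have Xn: "?X \<subseteq> nodes G2" using reach_in_nodes[OF wf_G2 rn] .
  have cl: "\<forall>x\<in>?X. set (att G2 x) \<subseteq> ?X"
    using Xn reach_step reach_trans by (metis reach_refl subset_iff)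
  have ag: "agree G2 ?S ?X" using Xn by (auto simp: agree_def sub_def)
  have rS: "reach ?S (root G2) = ?X" using agree_reach(1)[OF cl ag reach_refl] .
  have eS: "edge_rel ?S \<subseteq> edge_rel G2" using Xn by (auto simp: edge_rel_def sub_def)
  have "wf_lgraph F ar ?S"
    unfolding wf_lgraph_def
  proof (intro conjI ballI)
    show "finite (nodes ?S)" using Xn wf_G2 finite_subset by (auto simp: wf_lgraph_def sub_def)
    show "acyclic (edge_rel ?S)" using acyclic_subset[OF acyclic_G2 eS] .
    fix v assume v: "v \<in> nodes ?S"
    then have vX: "v \<in> ?X" by (simp add: sub_def)
    show "set (att ?S v) \<subseteq> nodes ?S" using cl vX by (simp add: sub_def)
    have c: "case lab G2 v of None \<Rightarrow> att G2 v = [] | Some f \<Rightarrow> f \<in> F \<and> length (att G2 v) = ar f"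
      using wf_G2 vX Xn unfolding wf_lgraph_def by blast
    have e1: "att ?S v = att G2 v" "lab ?S v = lab G2 v" using vX by (simp_all add: sub_def)
    show "case lab ?S v of None \<Rightarrow> att ?S v = [] | Some f \<Rightarrow> f \<in> F \<and> length (att ?S v) = ar f"
      unfolding e1 by (rule c)
  qed
  moreover have "is_tg F ar ?S" using calculation rS by (simp add: is_tg_def sub_def)
  moreover have "nrm_at C na ?S (root G2)" using nrm_agree[OF nrm_root cl ag reach_refl] .
  ultimately show ?thesis by (simp add: tg_nrm_def sub_def)
qed

end


theorem mainTheorem2:
  fixes F C :: "'f set" and ar na :: "'f \<Rightarrow> nat"
    and R :: "(('f,'w) lgraph \<times> 'w \<times> 'w) set" and G :: "('f,'v) tgraph"
  assumes "finite F" and "C \<subseteq> F" and "arg_sep F C ar na"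
    and "constructor_grs F C ar R" and "tg_nrm F C ar na G"
  shows "(\<forall>K l r \<phi>. (K,l,r) \<in> R \<longrightarrow> hom K l G \<phi> \<longrightarrow>
            (\<forall>vs ms. is_path G vs ms \<longrightarrow> hd vs = root G \<longrightarrow> last vs = \<phi> l \<longrightarrow> safe_path na G vs))
       \<and> (pt_terminating F C na R \<longrightarrow> (\<forall>H'. rstep R G H' \<longrightarrow> tg_nrm F C ar na H'))"
proof -
  have tg: "is_tg F ar G" and nr: "nrm_at C na G (root G)" using assms(5) by (auto simp: tg_nrm_def)
  show ?thesis
  proof (intro conjI allI impI)
    fix K l r \<phi> vs ms
    assume KR: "(K,l,r) \<in> R" and hm: "hom K l G \<phi>" and p: "is_path G vs ms" "hd vs = root G" "last vs = \<phi> l"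
    have "basic_at F C K l" using assms(4) KR by (auto simp: constructor_grs_def)
    then obtain f where f: "lab K l = Some f" "f \<notin> C" by (auto simp: basic_at_def)
    then have "lab G (\<phi> l) = Some f" using hm by (auto simp: hom_def)
    then show "safe_path na G vs" using part1[OF tg nr _ f(2) p(1,3)] by blast
  next
    fix H' assume pte: "pt_terminating F C na R" and rs: "rstep R G H'"
    obtain P where P: "precedence F C P" "\<forall>(K,l,r)\<in>R. pt P na K r l"
      using pte by (auto simp: pt_terminating_def)
    obtain K l r \<phi> \<psi> where st: "(K,l,r) \<in> R" "hom K l G \<phi>" "inj_on \<psi> (reach K r - reach K l)"
      "\<psi> ` (reach K r - reach K l) \<inter> nodes G = {}" "H' = rewrite_result G K l r \<phi> \<psi>"
      using rs by (auto simp: rstep_def)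
    have ru: "is_rule F ar (K,l,r)" "basic_at F C K l" using assms(4) st(1) by (auto simp: constructor_grs_def)
    then obtain f where f: "lab K l = Some f" "f \<notin> C" by (auto simp: basic_at_def)
    have ptr: "pt P na K r l" using P(2) st(1) by auto
    interpret rwctx F C ar na G K l r \<phi> \<psi> P f
      using tg nr ru st(2-4) P(1) ptr f by unfold_locales
    show "tg_nrm F C ar na H'" using st(5) rr result by simp
  qed
qed


end
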